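(* Let $\mathcal G$ be an $\mathrm{MD}_{n-2}(n)$-algebra with $n\geq6$. (1) If $\dim\mathcal G^1=1$, then $\mathcal G\cong\mathfrak h_{2m+1}\oplus\mathbb R$ with $2m=n-2$. (2) If $\dim\mathcal G^1=2$ and $\mathcal G^1$ is not contained in the centre of $\mathcal G$, then $\mathcal G\cong\operatorname{aff}(\mathbb C)\oplus\mathbb R^2$.
   Context: All Lie algebras are finite-dimensional over $\mathbb R$; $\mathcal G^1=[\mathcal G,\mathcal G]$. An $\mathrm{MD}_k(n)$-algebra is an $n$-dimensional real solvable Lie algebra all of whose non-trivial coadjoint orbits (orbits of the coadjoint action of its connected simply connected Lie group; $\dim\Omega_F=\operatorname{rank}(F([x_i,x_j]))$, non-trivial iff $F|_{\mathcal G^1}\ne0$) have dimension $k$. $\mathfrak h_{2m+1}$ is the Heisenberg algebra with basis $x_1,\dots,x_m,y_1,\dots,y_m,z$ and nonzero brackets $[x_i,y_i]=z$. $\operatorname{aff}(\mathbb C)$ has basis $x_1,x_2,y_1,y_2$ with nonzero brackets $[x_1,y_1]=y_1$, $[x_1,y_2]=y_2$, $[x_2,y_1]=-y_2$, $[x_2,y_2]=y_1$. Direct sums are Lie algebra direct sums, $\mathbb R^k$ abelian. *)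

theory Defs
  imports "HOL-Analysis.Analysis"
begin

text \<open>A finite-dimensional real Lie algebra is modelled as a euclidean space type
  (a finite-dimensional real vector space) with a bracket operation.\<close>

definition lie_algebra :: "('a::euclidean_space \<Rightarrow> 'a \<Rightarrow> 'a) \<Rightarrow> bool" where
  "lie_algebra br \<longleftrightarrow> bilinear br \<and> (\<forall>x. br x x = 0) \<and>
     (\<forall>x y z. br x (br y z) + br y (br z x) + br z (br x y) = 0)"

fun derived_series :: "('a::euclidean_space \<Rightarrow> 'a \<Rightarrow> 'a) \<Rightarrow> nat \<Rightarrow> 'a set" where
  "derived_series br 0 = UNIV"
| "derived_series br (Suc k) =
     span {br x y | x y. x \<in> derived_series br k \<and> y \<in> derived_series br k}"

definition derived_alg :: "('a::euclidean_space \<Rightarrow> 'a \<Rightarrow> 'a) \<Rightarrow> 'a set" where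
  "derived_alg br = derived_series br 1"

definition solvable_lie :: "('a::euclidean_space \<Rightarrow> 'a \<Rightarrow> 'a) \<Rightarrow> bool" where
  "solvable_lie br \<longleftrightarrow> lie_algebra br \<and> (\<exists>k. derived_series br k = {0})"

definition lie_centre :: "('a::euclidean_space \<Rightarrow> 'a \<Rightarrow> 'a) \<Rightarrow> 'a set" where
  "lie_centre br = {z. \<forall>x. br z x = 0}"

text \<open>Dimension of the coadjoint orbit of F: the rank of the matrix (F([x_i,x_j]))
  with respect to the basis Basis, computed as the dimension of its row space.\<close>
definition orbit_dim :: "('a::euclidean_space \<Rightarrow> 'a \<Rightarrow> 'a) \<Rightarrow> ('a \<Rightarrow> real) \<Rightarrow> nat" where
  "orbit_dim br F = dim ((\<lambda>i. \<Sum>j\<in>Basis. F (br i j) *\<^sub>R j) ` Basis)"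

text \<open>MD_k(n)-algebra: n-dimensional real solvable Lie algebra all of whose non-trivial
  coadjoint orbits (F restricted to G^1 nonzero) have dimension k.\<close>
definition MD_algebra :: "('a::euclidean_space \<Rightarrow> 'a \<Rightarrow> 'a) \<Rightarrow> nat \<Rightarrow> nat \<Rightarrow> bool" where
  "MD_algebra br k n \<longleftrightarrow> DIM('a) = n \<and> solvable_lie br \<and>
     (\<forall>F. linear F \<and> (\<exists>x\<in>derived_alg br. F x \<noteq> 0) \<longrightarrow> orbit_dim br F = k)"

text \<open>Isomorphism with the d-dimensional Lie algebra given by structure constants c
  (basis e_0..e_{d-1}, [e_i,e_j] = sum_k c i j k e_k): a linear isomorphism sends e_i to b i,
  i.e. b is a basis of G satisfying the same bracket relations.\<close>
definition iso_to_sc :: "('a::euclidean_space \<Rightarrow> 'a \<Rightarrow> 'a) \<Rightarrow> nat \<Rightarrow> (nat \<Rightarrow> nat \<Rightarrow> nat \<Rightarrow> real) \<Rightarrow> bool" where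
  "iso_to_sc br d c \<longleftrightarrow> (\<exists>b::nat \<Rightarrow> 'a. inj_on b {..<d} \<and> independent (b ` {..<d}) \<and>
      span (b ` {..<d}) = UNIV \<and>
      (\<forall>i<d. \<forall>j<d. br (b i) (b j) = (\<Sum>k<d. c i j k *\<^sub>R b k)))"

text \<open>Structure constants of h_{2m+1} + R (dimension 2m+2):
  x_i = e_i (i<m), y_i = e_{m+i}, z = e_{2m}, the R-summand = e_{2m+1};
  nonzero brackets [x_i,y_i] = z (and [y_i,x_i] = -z).\<close>
definition heis_R_sc :: "nat \<Rightarrow> nat \<Rightarrow> nat \<Rightarrow> nat \<Rightarrow> real" where
  "heis_R_sc m i j k =
     (if k = 2*m \<and> i < m \<and> j = i + m then 1
      else if k = 2*m \<and> j < m \<and> i = j + m then -1 else 0)"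

text \<open>Structure constants of aff(C) + R^2 (dimension 6):
  x1 = e_0, x2 = e_1, y1 = e_2, y2 = e_3, e_4, e_5 central;
  [x1,y1]=y1, [x1,y2]=y2, [x2,y1]=-y2, [x2,y2]=y1, plus antisymmetry.\<close>
definition affC_R2_sc :: "nat \<Rightarrow> nat \<Rightarrow> nat \<Rightarrow> real" where
  "affC_R2_sc i j k =
     (if (i,j,k) = (0,2,2) then 1 else if (i,j,k) = (2,0,2) then -1
      else if (i,j,k) = (0,3,3) then 1 else if (i,j,k) = (3,0,3) then -1
      else if (i,j,k) = (1,2,3) then -1 else if (i,j,k) = (2,1,3) then 1
      else if (i,j,k) = (1,3,2) then 1 else if (i,j,k) = (3,1,2) then -1
      else 0)"

end

theory Submission
  imports Defs
begin

lemma rank_nullity: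
  fixes f :: "'a::euclidean_space \<Rightarrow> 'b::euclidean_space"
  assumes lf: "linear f"
  shows "dim (range f) + dim {x. f x = 0} = DIM('a)"
proof -
  let ?K = "{x. f x = 0}"
  let ?P = "{y. \<forall>x\<in>?K. orthogonal x y}"
  have sK: "subspace ?K" using lf by (simp add: linear_subspace_kernel)
  have d1: "dim ?P + dim ?K = DIM('a)"
    using dim_subspace_orthogonal_to_vectors[OF sK subspace_UNIV] by simp
  have sP: "subspace ?P" unfolding subspace_def orthogonal_def by (simp add: inner_add_right)
  have img: "f ` ?P = range f"
  proof
    show "range f \<subseteq> f ` ?P"
    proof
      fix v assume "v \<in> range f"
      then obtain x where x: "v = f x" by auto
      obtain y z where yz: "y \<in> span ?K" "\<And>w. w \<in> span ?K \<Longrightarrow> orthogonal z w" "x = y + z"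
        using orthogonal_subspace_decomp_exists[of ?K x] by blast
      have "y \<in> ?K" using yz(1) span_eq_iff[THEN iffD2, OF sK] by simp
      have "z \<in> ?P"
      proof (simp, intro allI impI)
        fix w assume "f w = 0"
        then have "orthogonal z w" using yz(2)[of w] span_base[of w ?K] by simp
        then show "orthogonal w z" by (simp add: orthogonal_commute)
      qed
      moreover have "f x = f z" using \<open>y \<in> ?K\<close> yz(3) linear_add[OF lf] by simp
      ultimately show "v \<in> f ` ?P" using x by blast
    qed
  qed auto
  have inj: "inj_on f (span ?P)"
  proof (rule inj_onI)
    fix p q assume "p \<in> span ?P" "q \<in> span ?P" "f p = f q"
    moreover have spP: "span ?P = ?P" by (rule span_eq_iff[THEN iffD2, OF sP])
    ultimately have "p \<in> ?P" "q \<in> ?P" by (simp_all only:)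
    then have "p - q \<in> ?P" using subspace_diff[OF sP] by blast
    moreover have "p - q \<in> ?K" using \<open>f p = f q\<close> by (simp add: linear_diff[OF lf])
    ultimately have "orthogonal (p - q) (p - q)" by blast
    then show "p = q" by (simp add: orthogonal_def)
  qed
  have "dim (f ` ?P) = dim ?P" using dim_image_eq[OF lf inj] .
  then show ?thesis using d1 img by simp
qed

lemma dim_two_kernel:
  fixes p q :: "'a::euclidean_space \<Rightarrow> real"
  assumes "linear p" "linear q"
  shows "dim {y. p y = 0 \<and> q y = 0} + 2 \<ge> DIM('a)"
proof -
  let ?f = "\<lambda>y. (p y, q y)"
  have lf: "linear ?f" using assms
    by (intro linearI) (simp_all add: linear_add linear_cmul)
  have "dim (range ?f) \<le> DIM(real \<times> real)" by (rule dim_subset_UNIV)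
  moreover have "{y. ?f y = 0} = {y. p y = 0 \<and> q y = 0}" by (auto simp: zero_prod_def)
  ultimately show ?thesis using rank_nullity[OF lf] by simp
qed

lemma lin_functional_exists:
  fixes a b :: "'a::euclidean_space"
  assumes "a \<noteq> 0" "b \<notin> span {a}"
  shows "\<exists>f. linear f \<and> f a = 0 \<and> f b = (1::real)"
proof -
  define w where "w = b - ((b \<bullet> a) / (a \<bullet> a)) *\<^sub>R a"
  have aa: "a \<bullet> a \<noteq> 0" using assms(1) by simp
  have "w \<noteq> 0"
  proof
    assume "w = 0"
    then have "b = ((b \<bullet> a) / (a \<bullet> a)) *\<^sub>R a" by (simp add: w_def)
    then have "b \<in> span {a}" by (metis span_base span_mul insertI1)
    then show False using assms(2) by simp
  qed
  have aw: "a \<bullet> w = 0" using aa by (simp add: w_def inner_diff_right inner_commute)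
  have bw: "b \<bullet> w = w \<bullet> w"
    by (simp add: w_def inner_diff_left inner_diff_right aw[unfolded w_def inner_diff_right] inner_commute)
  define f where "f v = (v \<bullet> w) / (w \<bullet> w)" for v
  have "linear f" unfolding f_def by (intro linearI) (simp_all add: inner_add_left add_divide_distrib)
  moreover have "f a = 0" by (simp add: f_def aw)
  moreover have "f b = 1" using \<open>w \<noteq> 0\<close> by (simp add: f_def bw)
  ultimately show ?thesis by blast
qed

locale lie_alg =
  fixes br :: "'a::euclidean_space \<Rightarrow> 'a \<Rightarrow> 'a"
  assumes lie: "lie_algebra br"
begin

lemma bil: "bilinear br" using lie by (simp add: lie_algebra_def)
lemma alt[simp]: "br x x = 0" using lie by (simp add: lie_algebra_def)
lemma jac: "br x (br y z) + br y (br z x) + br z (br x y) = 0" using lie by (simp add: lie_algebra_def)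
lemma lin_r: "linear (br x)" using bil by (simp add: bilinear_def)
lemma lin_l: "linear (\<lambda>x. br x y)" using bil by (simp add: bilinear_def)
lemma ladd[simp]: "br (x + y) z = br x z + br y z" by (rule bilinear_ladd[OF bil])
lemma radd[simp]: "br x (y + z) = br x y + br x z" by (rule bilinear_radd[OF bil])
lemma lsub[simp]: "br (x - y) z = br x z - br y z" by (rule bilinear_lsub[OF bil])
lemma rsub[simp]: "br x (y - z) = br x y - br x z" by (rule bilinear_rsub[OF bil])
lemma lmul[simp]: "br (c *\<^sub>R x) y = c *\<^sub>R br x y" by (rule bilinear_lmul[OF bil])
lemma rmul[simp]: "br x (c *\<^sub>R y) = c *\<^sub>R br x y" by (rule bilinear_rmul[OF bil])
lemma lneg[simp]: "br (- x) y = - br x y" by (rule bilinear_lneg[OF bil])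
lemma rneg[simp]: "br x (- y) = - br x y" by (rule bilinear_rneg[OF bil])
lemma lzero[simp]: "br 0 x = 0" by (rule bilinear_lzero[OF bil])
lemma rzero[simp]: "br x 0 = 0" by (rule bilinear_rzero[OF bil])
lemma anti: "br x y = - br y x"
proof -
  have "br x y + br y x = 0" using alt[of "x + y"] by (simp only: ladd radd) (simp add: algebra_simps)
  then show ?thesis by (simp add: eq_neg_iff_add_eq_0)
qed

definition rad :: "('a \<Rightarrow> real) \<Rightarrow> 'a set" where
  "rad F = {x. \<forall>y. F (br x y) = 0}"

lemma orbit_dim_rad:
  assumes lF: "linear F"
  shows "orbit_dim br F + dim (rad F) = DIM('a)"
proof -
  define \<phi> where "\<phi> x = (\<Sum>j\<in>Basis. F (br x j) *\<^sub>R j)" for x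
  have lphi: "linear \<phi>"
    unfolding \<phi>_def
    by (intro linearI) (simp_all add: linear_add[OF lF] linear_cmul[OF lF] scaleR_add_left
          sum.distrib scaleR_sum_right)
  have "orbit_dim br F = dim (\<phi> ` Basis)" unfolding orbit_dim_def \<phi>_def by simp
  also have "\<dots> = dim (span (\<phi> ` Basis))" by simp
  also have "span (\<phi> ` Basis) = range \<phi>" using linear_span_image[OF lphi, of Basis] by simp
  finally have o: "orbit_dim br F = dim (range \<phi>)" .
  have "{x. \<phi> x = 0} = rad F"
  proof (intro set_eqI iffI)
    fix x assume "x \<in> {x. \<phi> x = 0}"
    then have z: "\<phi> x = 0" by simp
    have c: "F (br x j) = 0" if "j \<in> Basis" for j
    proof -
      have "\<phi> x \<bullet> j = F (br x j)" unfolding \<phi>_def using that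
        by (simp add: inner_sum_left inner_Basis if_distrib sum.delta cong: if_cong)
      then show ?thesis using z by simp
    qed
    show "x \<in> rad F" unfolding rad_def
    proof (intro CollectI allI)
      fix y
      have "br x y = (\<Sum>j\<in>Basis. (y \<bullet> j) *\<^sub>R br x j)"
      proof -
        have "br x y = br x (\<Sum>j\<in>Basis. (y \<bullet> j) *\<^sub>R j)" by (simp add: euclidean_representation)
        also have "\<dots> = (\<Sum>j\<in>Basis. br x ((y \<bullet> j) *\<^sub>R j))" by (rule linear_sum[OF lin_r])
        finally show ?thesis by simp
      qed
      then have "F (br x y) = (\<Sum>j\<in>Basis. (y \<bullet> j) * F (br x j))"
        by (simp add: linear_sum[OF lF] linear_cmul[OF lF])
      then show "F (br x y) = 0" using c by simp
    qed
  next
    fix x assume "x \<in> rad F"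
    then show "x \<in> {x. \<phi> x = 0}" by (simp add: rad_def \<phi>_def)
  qed
  then show ?thesis using o rank_nullity[OF lphi] by simp
qed

lemma rad_subspace: "linear F \<Longrightarrow> subspace (rad F)"
  unfolding rad_def subspace_def
  by (simp add: linear_add linear_cmul linear_0)

end

locale md = lie_alg br for br :: "'a::euclidean_space \<Rightarrow> 'a \<Rightarrow> 'a" +
  fixes n :: nat
  assumes MD: "MD_algebra br (n - 2) n" and n6: "n \<ge> 6"
begin

abbreviation "A \<equiv> derived_alg br"

lemma DIM: "DIM('a) = n" using MD by (simp add: MD_algebra_def)

lemma A_eq: "A = span {br x y | x y. True}"
  by (simp add: derived_alg_def)

lemma brA[simp]: "br x y \<in> A"
  unfolding A_eq by (rule span_base) blast

lemma subA: "subspace A" unfolding A_eq by (rule subspace_span)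

lemma rad2:
  fixes F :: "'a \<Rightarrow> real"
  assumes "linear F" "v \<in> A" "F v \<noteq> 0"
  shows "dim (rad F) = 2"
proof -
  have "orbit_dim br F = n - 2" using MD assms by (auto simp: MD_algebra_def)
  then show ?thesis using orbit_dim_rad[OF assms(1)] DIM n6 by simp
qed

lemma not_big:
  fixes F p q :: "'a \<Rightarrow> real"
  assumes "linear F" "v \<in> A" "F v \<noteq> 0" "linear p" "linear q"
    and "{y. p y = 0 \<and> q y = 0} \<subseteq> rad F"
  shows False
proof -
  have "dim {y. p y = 0 \<and> q y = 0} \<le> dim (rad F)" using assms(6) by (rule dim_subset)
  then show False using rad2[OF assms(1-3)] dim_two_kernel[OF assms(4,5)] DIM n6 by simp
qed

lemma noL:
  fixes F \<nu> :: "'a \<Rightarrow> real"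
  assumes lF: "linear F" and "v \<in> A" "F v \<noteq> 0" and l\<nu>: "linear \<nu>"
    and cyc: "\<And>x y w. \<nu> x * F (br y w) + \<nu> y * F (br w x) + \<nu> w * F (br x y) = 0"
  shows "\<nu> x1 = 0"
proof (rule ccontr)
  assume ne: "\<nu> x1 \<noteq> 0"
  define x0 where "x0 = (1 / \<nu> x1) *\<^sub>R x1"
  have n1: "\<nu> x0 = 1" using ne by (simp add: x0_def linear_cmul[OF l\<nu>])
  have lq: "linear (\<lambda>y. F (br x0 y))"
    by (intro linearI) (simp_all add: linear_add[OF lF] linear_cmul[OF lF])
  have "{y. \<nu> y = 0 \<and> F (br x0 y) = 0} \<subseteq> rad F"
  proof
    fix y assume "y \<in> {y. \<nu> y = 0 \<and> F (br x0 y) = 0}"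
    then have y: "\<nu> y = 0" "F (br x0 y) = 0" by auto
    show "y \<in> rad F" unfolding rad_def
    proof (intro CollectI allI)
      fix w show "F (br y w) = 0" using cyc[of x0 y w] n1 y by simp
    qed
  qed
  then show False using not_big[OF lF assms(2,3) l\<nu> lq] by simp
qed

lemma noWedge:
  fixes F p q :: "'a \<Rightarrow> real"
  assumes lF: "linear F" and "v \<in> A" "F v \<noteq> 0" and lp: "linear p" and lq: "linear q"
    and eq: "\<And>x y. F (br x y) = p x * q y - p y * q x"
  shows False
proof -
  have "{y. p y = 0 \<and> q y = 0} \<subseteq> rad F"
    unfolding rad_def using eq by auto
  then show False using not_big[OF lF assms(2,3) lp lq] by simp
qed

lemma cycI:
  fixes F g \<nu> :: "'a \<Rightarrow> real"
  assumes lg: "linear g" and ev: "\<And>x v. v \<in> A \<Longrightarrow> g (br x v) = \<nu> x * F v"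
  shows "\<nu> x * F (br y w) + \<nu> y * F (br w x) + \<nu> w * F (br x y) = 0"
proof -
  have "g (br x (br y w) + br y (br w x) + br w (br x y)) = 0"
    using jac[of x y w] linear_0[OF lg] by simp
  then show ?thesis using ev by (simp add: linear_add[OF lg])
qed

end

lemma alt_anti:
  fixes \<omega> :: "'a::real_vector \<Rightarrow> 'a \<Rightarrow> real"
  assumes bw: "bilinear \<omega>" and aw: "\<And>x. \<omega> x x = 0"
  shows "\<omega> a b = - \<omega> b a"
proof -
  have "\<omega> (a + b) (a + b) = \<omega> a a + \<omega> a b + (\<omega> b a + \<omega> b b)"
    by (simp add: bilinear_ladd[OF bw] bilinear_radd[OF bw])
  then show ?thesis using aw[of "a+b"] aw[of a] aw[of b] by simp
qed

lemma darboux: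
  fixes \<omega> :: "'a::euclidean_space \<Rightarrow> 'a \<Rightarrow> real"
  assumes bw: "bilinear \<omega>" and aw: "\<And>x. \<omega> x x = 0"
  shows "subspace V \<Longrightarrow> \<exists>(k::nat) x y. (\<forall>i<k. x i \<in> V \<and> y i \<in> V) \<and>
     (\<forall>i<k. \<forall>j<k. \<omega> (x i) (y j) = (if i = j then 1 else 0) \<and> \<omega> (x i) (x j) = 0 \<and> \<omega> (y i) (y j) = 0) \<and>
     V \<subseteq> span (x ` {..<k} \<union> y ` {..<k} \<union> {v\<in>V. \<forall>w\<in>V. \<omega> v w = 0})"
proof (induction "dim V" arbitrary: V rule: less_induct)
  case less
  note sV = less.prems
  have anti: "\<omega> a b = - \<omega> b a" for a b by (rule alt_anti[OF bw aw])
  have ladd: "\<omega> (a + b) c = \<omega> a c + \<omega> b c" for a b c by (rule bilinear_ladd[OF bw])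
  have radd: "\<omega> c (a + b) = \<omega> c a + \<omega> c b" for a b c by (rule bilinear_radd[OF bw])
  have lsub: "\<omega> (a - b) c = \<omega> a c - \<omega> b c" for a b c by (rule bilinear_lsub[OF bw])
  have rsub: "\<omega> c (a - b) = \<omega> c a - \<omega> c b" for a b c by (rule bilinear_rsub[OF bw])
  have lmul: "\<omega> (r *\<^sub>R a) c = r * \<omega> a c" for r a c using bilinear_lmul[OF bw] by simp
  have rmul: "\<omega> c (r *\<^sub>R a) = r * \<omega> c a" for r a c using bilinear_rmul[OF bw] by simp
  show ?case
  proof (cases "\<forall>v\<in>V. \<forall>w\<in>V. \<omega> v w = 0")
    case True
    have "V \<subseteq> span ((\<lambda>i. 0) ` {..<0::nat} \<union> (\<lambda>i. 0) ` {..<0::nat} \<union> {v\<in>V. \<forall>w\<in>V. \<omega> v w = 0})"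
      using True by (auto intro: span_base)
    then show ?thesis
      by - (intro exI[of _ "0::nat"] exI[of _ "\<lambda>i::nat. 0::'a"], simp)
  next
    case False
    then obtain x0 y1 where x0: "x0 \<in> V" and y1: "y1 \<in> V" and ne: "\<omega> x0 y1 \<noteq> 0" by blast
    define y0 where "y0 = (1 / \<omega> x0 y1) *\<^sub>R y1"
    have y0: "y0 \<in> V" using y1 sV by (simp add: y0_def subspace_scale)
    have xy: "\<omega> x0 y0 = 1" using ne by (simp add: y0_def rmul)
    have yx: "\<omega> y0 x0 = -1" using xy anti[of y0 x0] by simp
    define V' where "V' = {v\<in>V. \<omega> x0 v = 0 \<and> \<omega> y0 v = 0}"
    have sV': "subspace V'" unfolding V'_def subspace_def
      using sV by (simp add: subspace_0 subspace_add subspace_scale radd rmul bilinear_rzero[OF bw])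
    have "x0 \<notin> V'" using yx by (simp add: V'_def)
    moreover have "V' \<subseteq> V" by (auto simp: V'_def)
    ultimately have "V' \<subset> V" using x0 by blast
    have e1: "span V = V" using sV by simp
    have e2: "span V' = V'" using sV' by simp
    have "span V' \<subset> span V" using \<open>V' \<subset> V\<close> by (simp only: e1 e2)
    then have "dim V' < dim V" by (rule dim_psubset)
    from less.hyps[OF this sV'] obtain k :: nat and x' y' where
      mem: "\<forall>i<k. x' i \<in> V' \<and> y' i \<in> V'" and
      rel: "\<forall>i<k. \<forall>j<k. \<omega> (x' i) (y' j) = (if i = j then 1 else 0) \<and> \<omega> (x' i) (x' j) = 0 \<and> \<omega> (y' i) (y' j) = 0" and
      spn: "V' \<subseteq> span (x' ` {..<k} \<union> y' ` {..<k} \<union> {v\<in>V'. \<forall>w\<in>V'. \<omega> v w = 0})"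
      by blast
    define x where "x = x'(k := x0)"
    define y where "y = y'(k := y0)"
    have memV: "\<forall>i<Suc k. x i \<in> V \<and> y i \<in> V"
      using mem x0 y0 by (auto simp: x_def y_def V'_def less_Suc_eq)
    have o1: "\<omega> x0 (x' i) = 0" "\<omega> x0 (y' i) = 0" "\<omega> y0 (x' i) = 0" "\<omega> y0 (y' i) = 0" if "i < k" for i
      using mem that by (auto simp: V'_def)
    have rel': "\<forall>i<Suc k. \<forall>j<Suc k. \<omega> (x i) (y j) = (if i = j then 1 else 0) \<and> \<omega> (x i) (x j) = 0 \<and> \<omega> (y i) (y j) = 0"
    proof (intro allI impI)
      fix i j assume i: "i < Suc k" and j: "j < Suc k"
      show "\<omega> (x i) (y j) = (if i = j then 1 else 0) \<and> \<omega> (x i) (x j) = 0 \<and> \<omega> (y i) (y j) = 0"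
      proof (cases "i = k")
        case True
        then show ?thesis
        proof (cases "j = k")
          case True
          then show ?thesis using \<open>i = k\<close> xy aw by (simp add: x_def y_def)
        next
          case False
          then have "j < k" using j by simp
          then show ?thesis using \<open>i = k\<close> False o1[of j] by (simp add: x_def y_def)
        qed
      next
        case False
        then have ik: "i < k" using i by simp
        show ?thesis
        proof (cases "j = k")
          case True
          then show ?thesis using ik o1[of i] anti[of "x' i" y0] anti[of "x' i" x0] anti[of "y' i" y0]
            by (simp add: x_def y_def)
        next
          case False
          then have "j < k" using j by simp
          then show ?thesis using ik rel \<open>i \<noteq> k\<close> False by (simp add: x_def y_def)
        qed
      qed
    qed
    define S where "S = x ` {..<Suc k} \<union> y ` {..<Suc k} \<union> {v\<in>V. \<forall>w\<in>V. \<omega> v w = 0}"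
    have radsub: "{v\<in>V'. \<forall>w\<in>V'. \<omega> v w = 0} \<subseteq> {v\<in>V. \<forall>w\<in>V. \<omega> v w = 0}"
    proof
      fix d assume "d \<in> {v\<in>V'. \<forall>w\<in>V'. \<omega> v w = 0}"
      then have d: "d \<in> V'" "\<And>w. w \<in> V' \<Longrightarrow> \<omega> d w = 0" by auto
      have dV: "d \<in> V" "\<omega> d x0 = 0" "\<omega> d y0 = 0"
        using d(1) anti[of d x0] anti[of d y0] by (auto simp: V'_def)
      have "\<omega> d w = 0" if w: "w \<in> V" for w
      proof -
        define pw where "pw = w - \<omega> x0 w *\<^sub>R y0 + \<omega> y0 w *\<^sub>R x0"
        have "pw \<in> V'"
          unfolding V'_def pw_def using sV w x0 y0 xy yx aw[of x0] aw[of y0]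
          by (simp add: subspace_add subspace_diff subspace_scale radd rsub rmul)
        then have "\<omega> d pw = 0" by (rule d(2))
        then show ?thesis using dV by (simp add: pw_def radd rsub rmul)
      qed
      then show "d \<in> {v\<in>V. \<forall>w\<in>V. \<omega> v w = 0}" using dV by simp
    qed
    have sub1: "x' ` {..<k} \<union> y' ` {..<k} \<union> {v\<in>V'. \<forall>w\<in>V'. \<omega> v w = 0} \<subseteq> S"
    proof -
      have "x' ` {..<k} \<subseteq> x ` {..<Suc k}"
      proof
        fix v assume "v \<in> x' ` {..<k}"
        then obtain i where "i < k" "v = x' i" by auto
        then have "v = x i" "i < Suc k" by (auto simp: x_def)
        then show "v \<in> x ` {..<Suc k}" by blast
      qed
      moreover have "y' ` {..<k} \<subseteq> y ` {..<Suc k}"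
      proof
        fix v assume "v \<in> y' ` {..<k}"
        then obtain i where "i < k" "v = y' i" by auto
        then have "v = y i" "i < Suc k" by (auto simp: y_def)
        then show "v \<in> y ` {..<Suc k}" by blast
      qed
      ultimately show ?thesis using radsub unfolding S_def by blast
    qed
    have "V \<subseteq> span S"
    proof
      fix w assume w: "w \<in> V"
      define pw where "pw = w - \<omega> x0 w *\<^sub>R y0 + \<omega> y0 w *\<^sub>R x0"
      have "pw \<in> V'"
        unfolding V'_def pw_def using sV w x0 y0 xy yx aw[of x0] aw[of y0]
        by (simp add: subspace_add subspace_diff subspace_scale radd rsub rmul)
      then have "pw \<in> span S" using spn span_mono[OF sub1] by blast
      moreover have "x0 \<in> span S" "y0 \<in> span S"
        unfolding S_def x_def y_def by (auto intro!: span_base)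
      ultimately have "pw + \<omega> x0 w *\<^sub>R y0 - \<omega> y0 w *\<^sub>R x0 \<in> span S"
        by (intro span_add span_diff span_scale)
      then show "w \<in> span S" by (simp add: pw_def)
    qed
    then show ?thesis using memV rel' unfolding S_def by blast
  qed
qed

lemma sum_split2: "(\<Sum>i<k+k::nat. f i) = (\<Sum>i<k. f i) + (\<Sum>i<k. f (k+i)::'a::comm_monoid_add)"
proof -
  have "(\<Sum>i<k+k. f i) = (\<Sum>i\<in>{0..<k+k}. f i)" by (simp add: atLeast0LessThan)
  also have "\<dots> = (\<Sum>i\<in>{0..<k}. f i) + (\<Sum>i\<in>{k..<k+k}. f i)"
    by (rule sum.atLeastLessThan_concat[symmetric]) simp_all
  also have "(\<Sum>i\<in>{k..<k+k}. f i) = (\<Sum>i\<in>{0..<k}. f (k+i))"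
    using sum.shift_bounds_nat_ivl[of f 0 k k] by (simp add: add.commute)
  finally show ?thesis by (simp add: atLeast0LessThan)
qed

lemma sum_split4: "(\<Sum>i<2*k+2::nat. f i) = (\<Sum>i<k. f i) + (\<Sum>i<k. f (k+i)) + f (2*k) + (f (2*k+1)::'a::comm_monoid_add)"
proof -
  have "(\<Sum>i<2*k+2. f i) = (\<Sum>i<k+k. f i) + f (2*k) + f (2*k+1)"
    by (simp add: mult_2 numeral_2_eq_2)
  then show ?thesis by (simp add: sum_split2)
qed

lemma indep_from_coeffs:
  fixes b :: "nat \<Rightarrow> 'a::euclidean_space"
  assumes co: "\<And>u. (\<Sum>i<d. u i *\<^sub>R b i) = 0 \<Longrightarrow> \<forall>i<d. u i = 0"
  shows "inj_on b {..<d} \<and> independent (b ` {..<d})"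
proof
  show inj: "inj_on b {..<d}"
  proof (rule inj_onI, rule ccontr)
    fix i j assume i: "i \<in> {..<d}" and j: "j \<in> {..<d}" and e: "b i = b j" and ne: "i \<noteq> j"
    define u where "u l = (if l = i then 1 else if l = j then -1 else (0::real))" for l
    have "(\<Sum>l<d. u l *\<^sub>R b l) = (\<Sum>l<d. (if l = i then b i else 0) + (if l = j then - b j else 0))"
      by (rule sum.cong) (auto simp: u_def ne)
    also have "\<dots> = b i - b j" using i j by (simp add: sum.distrib)
    finally have "(\<Sum>l<d. u l *\<^sub>R b l) = 0" using e by simp
    then have "u i = 0" using co i by blast
    then show False by (simp add: u_def)
  qed
  show "independent (b ` {..<d})"
  proof (rule independent_if_scalars_zero)
    show "finite (b ` {..<d})" by simp
    fix f v assume s: "(\<Sum>x\<in>b ` {..<d}. f x *\<^sub>R x) = 0" and v: "v \<in> b ` {..<d}"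
    have "(\<Sum>i<d. f (b i) *\<^sub>R b i) = 0"
      using s sum.reindex[OF inj, of "\<lambda>x. f x *\<^sub>R x"] by simp
    then have "\<forall>i<d. f (b i) = 0" by (rule co)
    then show "f v = 0" using v by auto
  qed
qed

lemma indep_from_span:
  fixes b :: "nat \<Rightarrow> 'a::euclidean_space"
  assumes sp: "UNIV \<subseteq> span (b ` {..<d})" and d: "d = DIM('a)"
  shows "inj_on b {..<d} \<and> independent (b ` {..<d})"
proof -
  have "dim (UNIV::'a set) \<le> card (b ` {..<d})"
    by (rule span_card_ge_dim[OF _ sp]) simp_all
  moreover have "card (b ` {..<d}) \<le> d" using card_image_le[of "{..<d}" b] by simp
  ultimately have c: "card (b ` {..<d}) = d" using d by simp
  have "inj_on b {..<d}" by (rule eq_card_imp_inj_on) (simp_all add: c)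
  moreover have "independent (b ` {..<d})"
    by (rule card_le_dim_spanning[OF _ sp]) (simp_all add: c d[symmetric])
  ultimately show ?thesis by blast
qed

context md begin

lemma part1:
  assumes dA: "dim A = 1"
  shows "\<exists>m. 2 * m = n - 2 \<and> iso_to_sc br (2 * m + 2) (heis_R_sc m)"
proof -
  obtain B where B: "B \<subseteq> A" "independent B" "A \<subseteq> span B" "card B = dim A"
    using basis_exists by blast
  have "card B = 1" using B(4) dA by simp
  then obtain z where Bz: "B = {z}" by (rule card_1_singletonE)
  have zA: "z \<in> A" using B(1) Bz by simp
  have z0: "z \<noteq> 0" using B(2) Bz by (auto simp: dependent_single)
  have Aspan: "A \<subseteq> span {z}" using B(3) Bz by simp
  define F where "F v = (v \<bullet> z) / (z \<bullet> z)" for v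
  have lF: "linear F" unfolding F_def
    by (intro linearI) (simp_all add: inner_add_left add_divide_distrib)
  have Fz: "F z = 1" using z0 by (simp add: F_def)
  have Arep: "v = F v *\<^sub>R z" if "v \<in> A" for v
  proof -
    have "v \<in> span {z}" using Aspan that by blast
    then obtain c where "v = c *\<^sub>R z" by (auto simp: span_singleton)
    then show ?thesis using Fz by (simp add: linear_cmul[OF lF])
  qed
  have brz: "br x y = F (br x y) *\<^sub>R z" for x y by (rule Arep) simp
  define \<omega> where "\<omega> x y = F (br x y)" for x y
  have bw: "bilinear \<omega>" unfolding bilinear_def \<omega>_def
    by (auto intro!: linearI simp: linear_add[OF lF] linear_cmul[OF lF])
  have aw: "\<omega> x x = 0" for x by (simp add: \<omega>_def linear_0[OF lF])
  have anti\<omega>: "\<omega> a c = - \<omega> c a" for a c by (rule alt_anti[OF bw aw])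
  have lnu: "linear (\<lambda>x. F (br x z))"
    by (intro linearI) (simp_all add: linear_add[OF lF] linear_cmul[OF lF])
  have ev: "F (br x v) = F (br x z) * F v" if "v \<in> A" for x v
  proof -
    have "br x v = F v *\<^sub>R br x z" using Arep[OF that] by (metis rmul)
    then show ?thesis by (simp add: linear_cmul[OF lF])
  qed
  have cyc: "F (br x z) * F (br y w) + F (br y z) * F (br w x) + F (br w z) * F (br x y) = 0" for x y w
    by (rule cycI[OF lF ev])
  have Fxz: "F (br x z) = 0" for x
    by (rule noL[OF lF zA, of "\<lambda>x. F (br x z)"]) (simp_all add: Fz lnu cyc)
  have central: "br z x = 0" for x
  proof -
    have "br x z = 0" using brz[of x z] Fxz[of x] by simp
    then show ?thesis using anti[of z x] by simp
  qed
  have rad_eq: "{v\<in>UNIV. \<forall>w\<in>UNIV. \<omega> v w = 0} = rad F" by (simp add: rad_def \<omega>_def)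
  have dimrad: "dim (rad F) = 2" by (rule rad2[OF lF zA]) (simp add: Fz)
  have zrad: "z \<in> rad F" by (simp add: rad_def central linear_0[OF lF])
  obtain k :: nat and x y where
    rel: "\<forall>i<k. \<forall>j<k. \<omega> (x i) (y j) = (if i = j then 1 else 0) \<and> \<omega> (x i) (x j) = 0 \<and> \<omega> (y i) (y j) = 0" and
    spn0: "UNIV \<subseteq> span (x ` {..<k} \<union> y ` {..<k} \<union> {v\<in>UNIV. \<forall>w\<in>UNIV. \<omega> v w = 0})"
    using darboux[OF bw aw subspace_UNIV] by blast
  have spn: "UNIV \<subseteq> span (x ` {..<k} \<union> y ` {..<k} \<union> rad F)" using spn0 unfolding rad_eq .
  have zs: "{z} \<subseteq> rad F" using zrad by simp
  have zi: "independent {z}" using z0 by (simp add: dependent_single)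
  obtain C where C: "{z} \<subseteq> C" "C \<subseteq> rad F" "independent C" "rad F \<subseteq> span C"
    by (rule maximal_independent_subset_extend[OF zs zi])
  have cC: "card C = 2" using basis_card_eq_dim[OF C(2,4,3)] dimrad by simp
  have fC: "finite C" by (rule card_ge_0_finite) (simp add: cC)
  have "card (C - {z}) = 1" using cC C(1) fC by (simp add: card_Diff_singleton)
  then obtain u where u: "C - {z} = {u}" by (rule card_1_singletonE)
  have Czu: "C = {z, u}" and uz: "u \<noteq> z" using u C(1) by auto
  have urad: "u \<in> rad F" using C(2) Czu by simp
  have "independent {u, z}" using C(3) Czu by (simp add: insert_commute)
  then have u_ns: "u \<notin> span {z}" using uz by (simp add: independent_insert)
  have \<omega>u: "\<omega> u w = 0" "\<omega> w u = 0" for w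
    using urad anti\<omega>[of w u] by (simp_all add: rad_def \<omega>_def)
  have \<omega>z: "\<omega> z w = 0" "\<omega> w z = 0" for w
    using zrad anti\<omega>[of w z] by (simp_all add: rad_def \<omega>_def)
  define b where "b i = (if i < k then x i else if i < 2*k then y (i - k) else if i = 2*k then z else u)" for i
  have bx: "b i = x i" if "i < k" for i using that by (simp add: b_def)
  have by': "b (k + i) = y i" if "i < k" for i using that by (simp add: b_def)
  have bz: "b (2*k) = z" by (simp add: b_def)
  have bu: "b (2*k+1) = u" by (simp add: b_def)
  have lw1: "linear (\<lambda>v. \<omega> v w)" for w using bw by (simp add: bilinear_def)
  have lw2: "linear (\<lambda>v. \<omega> w v)" for w using bw by (simp add: bilinear_def)
  have co: "\<forall>i<2*k+2. c i = 0" if s0: "(\<Sum>i<2*k+2. c i *\<^sub>R b i) = 0" for c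
  proof -
    define S1 where "S1 = (\<Sum>i<k. c i *\<^sub>R x i)"
    define S2 where "S2 = (\<Sum>i<k. c (k+i) *\<^sub>R y i)"
    have "(\<Sum>i<2*k+2. c i *\<^sub>R b i) = (\<Sum>i<k. c i *\<^sub>R b i) + (\<Sum>i<k. c (k+i) *\<^sub>R b (k+i))
            + c (2*k) *\<^sub>R b (2*k) + c (2*k+1) *\<^sub>R b (2*k+1)"
      by (rule sum_split4)
    also have "(\<Sum>i<k. c i *\<^sub>R b i) = S1" unfolding S1_def by (rule sum.cong) (simp_all add: bx)
    also have "(\<Sum>i<k. c (k+i) *\<^sub>R b (k+i)) = S2" unfolding S2_def by (rule sum.cong) (simp_all add: by')
    finally have sum0: "S1 + S2 + c (2*k) *\<^sub>R z + c (2*k+1) *\<^sub>R u = 0" using s0 bz bu by simp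
    have a1: "\<omega> S1 (y j) = c j" if "j < k" for j
    proof -
      have "\<omega> S1 (y j) = (\<Sum>i<k. c i * \<omega> (x i) (y j))"
        unfolding S1_def by (simp add: linear_sum[OF lw1] linear_cmul[OF lw1])
      also have "\<dots> = (\<Sum>i<k. if i = j then c i else 0)"
        by (rule sum.cong) (simp_all add: rel that)
      finally show ?thesis using that by simp
    qed
    have a2: "\<omega> S2 (y j) = 0" if "j < k" for j
    proof -
      have "\<omega> S2 (y j) = (\<Sum>i<k. c (k+i) * \<omega> (y i) (y j))"
        unfolding S2_def by (simp add: linear_sum[OF lw1] linear_cmul[OF lw1])
      also have "\<dots> = 0" by (rule sum.neutral) (simp add: rel that)
      finally show ?thesis .
    qed
    have a3: "\<omega> (x j) S1 = 0" if "j < k" for j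
    proof -
      have "\<omega> (x j) S1 = (\<Sum>i<k. c i * \<omega> (x j) (x i))"
        unfolding S1_def by (simp add: linear_sum[OF lw2] linear_cmul[OF lw2])
      also have "\<dots> = 0" by (rule sum.neutral) (simp add: rel that)
      finally show ?thesis .
    qed
    have a4: "\<omega> (x j) S2 = c (k+j)" if "j < k" for j
    proof -
      have "\<omega> (x j) S2 = (\<Sum>i<k. c (k+i) * \<omega> (x j) (y i))"
        unfolding S2_def by (simp add: linear_sum[OF lw2] linear_cmul[OF lw2])
      also have "\<dots> = (\<Sum>i<k. if i = j then c (k+i) else 0)"
        by (rule sum.cong) (auto simp: rel that)
      finally show ?thesis using that by simp
    qed
    have cj: "c j = 0" if "j < k" for j
    proof -
      have "\<omega> (S1 + S2 + c (2*k) *\<^sub>R z + c (2*k+1) *\<^sub>R u) (y j) = 0" using sum0 by (simp add: \<omega>_def linear_0[OF lF])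
      then show ?thesis using a1[OF that] a2[OF that] \<omega>z \<omega>u
        by (simp add: bilinear_ladd[OF bw] bilinear_lmul[OF bw])
    qed
    have ckj: "c (k+j) = 0" if "j < k" for j
    proof -
      have "\<omega> (x j) (S1 + S2 + c (2*k) *\<^sub>R z + c (2*k+1) *\<^sub>R u) = 0" using sum0 by (simp add: \<omega>_def linear_0[OF lF])
      then show ?thesis using a3[OF that] a4[OF that] \<omega>z \<omega>u
        by (simp add: bilinear_radd[OF bw] bilinear_rmul[OF bw])
    qed
    have "S1 = 0" unfolding S1_def using cj by simp
    moreover have "S2 = 0" unfolding S2_def using ckj by simp
    ultimately have zu: "c (2*k) *\<^sub>R z + c (2*k+1) *\<^sub>R u = 0" using sum0 by simp
    have cu: "c (2*k+1) = 0"
    proof (rule ccontr)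
      assume ne: "c (2*k+1) \<noteq> 0"
      have e1: "c (2*k+1) *\<^sub>R u = - (c (2*k) *\<^sub>R z)" using zu by (simp add: add_eq_0_iff)
      have "u = (1 / c (2*k+1)) *\<^sub>R (c (2*k+1) *\<^sub>R u)" using ne by simp
      also have "\<dots> = (- c (2*k) / c (2*k+1)) *\<^sub>R z" unfolding e1 by simp
      finally have ue: "u = (- c (2*k) / c (2*k+1)) *\<^sub>R z" .
      have "(- c (2*k) / c (2*k+1)) *\<^sub>R z \<in> span {z}"
        by (rule span_scale) (simp add: span_base)
      then have "u \<in> span {z}" using ue by simp
      then show False using u_ns by simp
    qed
    then have cz: "c (2*k) = 0" using zu z0 by simp
    show ?thesis
    proof (intro allI impI)
      fix i assume "i < 2*k+2"
      then consider "i < k" | "k \<le> i \<and> i < 2*k" | "i = 2*k" | "i = 2*k+1" by linarith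
      then show "c i = 0"
      proof cases
        case 1 then show ?thesis by (rule cj)
      next
        case 2
        then have "c (k + (i - k)) = 0" by (intro ckj) linarith
        then show ?thesis using 2 by simp
      next
        case 3 then show ?thesis using cz by simp
      next
        case 4 then show ?thesis using cu by simp
      qed
    qed
  qed
  have ind: "inj_on b {..<2*k+2} \<and> independent (b ` {..<2*k+2})"
    by (rule indep_from_coeffs) (rule co)
  have sub: "x ` {..<k} \<union> y ` {..<k} \<union> rad F \<subseteq> span (b ` {..<2*k+2})"
  proof -
    have "x ` {..<k} \<subseteq> b ` {..<2*k+2}"
    proof
      fix v assume "v \<in> x ` {..<k}"
      then obtain i where i: "i < k" "v = x i" by auto
      then have "i < 2*k+2" by simp
      moreover have "v = b i" using i bx by simp
      ultimately show "v \<in> b ` {..<2*k+2}" by blast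
    qed
    moreover have "y ` {..<k} \<subseteq> b ` {..<2*k+2}"
    proof
      fix v assume "v \<in> y ` {..<k}"
      then obtain i where i: "i < k" "v = y i" by auto
      then have "k + i < 2*k+2" by simp
      moreover have "v = b (k + i)" using by'[OF i(1)] i(2) by simp
      ultimately show "v \<in> b ` {..<2*k+2}" by blast
    qed
    moreover have "rad F \<subseteq> span (b ` {..<2*k+2})"
    proof -
      have "C \<subseteq> b ` {..<2*k+2}"
      proof -
        have m1: "2*k \<in> {..<2*k+2}" and m2: "2*k+1 \<in> {..<2*k+2}" by simp_all
        have "z \<in> b ` {..<2*k+2}" by (rule image_eqI[where f=b and x="2*k", OF bz[symmetric] m1])
        moreover have "u \<in> b ` {..<2*k+2}" by (rule image_eqI[where f=b and x="2*k+1", OF bu[symmetric] m2])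
        ultimately show ?thesis using Czu by simp
      qed
      then have "span C \<subseteq> span (b ` {..<2*k+2})" by (rule span_mono)
      then show ?thesis using C(4) by (rule order_trans[rotated])
    qed
    ultimately have "x ` {..<k} \<union> y ` {..<k} \<subseteq> b ` {..<2*k+2}" by simp
    then have "x ` {..<k} \<union> y ` {..<k} \<subseteq> span (b ` {..<2*k+2})"
      using span_superset[of "b ` {..<2*k+2}"] by (rule order_trans)
    then show ?thesis using \<open>rad F \<subseteq> span (b ` {..<2*k+2})\<close> by simp
  qed
  have spUNIV: "span (b ` {..<2*k+2}) = UNIV"
  proof -
    have "span (x ` {..<k} \<union> y ` {..<k} \<union> rad F) \<subseteq> span (b ` {..<2*k+2})"
      using span_mono[OF sub] by (simp only: span_span)
    then show ?thesis using spn by auto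
  qed
  have "n = 2*k+2"
  proof -
    have "n = dim (UNIV::'a set)" using DIM by simp
    also have "\<dots> = dim (span (b ` {..<2*k+2}))" by (simp only: spUNIV)
    also have "\<dots> = dim (b ` {..<2*k+2})" by (rule dim_span)
    also have "\<dots> = card (b ` {..<2*k+2})" using ind by (simp add: dim_eq_card_independent)
    also have "\<dots> = 2*k+2" using ind by (simp add: card_image)
    finally show ?thesis .
  qed
  have heis0: "heis_R_sc k i j l = 0" if "l \<noteq> 2*k" for i j l
    using that by (simp add: heis_R_sc_def)
  have \<omega>b: "\<omega> (b i) (b j) = heis_R_sc k i j (2*k)" if i: "i < 2*k+2" and j: "j < 2*k+2" for i j
  proof -
    consider "i < k" | "k \<le> i \<and> i < 2*k" | "i \<ge> 2*k" by linarith
    then show ?thesis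
    proof cases
      case 1
      consider "j < k" | "k \<le> j \<and> j < 2*k" | "j \<ge> 2*k" by linarith
      then show ?thesis
      proof cases
        case a: 1 then show ?thesis using 1 rel by (simp add: b_def heis_R_sc_def)
      next
        case a: 2
        have "\<omega> (x i) (y (j - k)) = (if i = j - k then 1 else 0)" using rel 1 a by auto
        then show ?thesis using 1 a by (auto simp: b_def heis_R_sc_def)
      next
        case a: 3
        then have "b j = z \<or> b j = u" by (simp add: b_def)
        then show ?thesis using 1 a \<omega>z \<omega>u by (auto simp: heis_R_sc_def)
      qed
    next
      case 2
      consider "j < k" | "k \<le> j \<and> j < 2*k" | "j \<ge> 2*k" by linarith
      then show ?thesis
      proof cases
        case a: 1
        have "\<omega> (x j) (y (i - k)) = (if j = i - k then 1 else 0)" using rel 2 a by auto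
        then have "\<omega> (y (i - k)) (x j) = - (if j = i - k then 1 else 0)" using anti\<omega>[of "y (i - k)" "x j"] by simp
        then show ?thesis using 2 a by (auto simp: b_def heis_R_sc_def)
      next
        case a: 2
        have "\<omega> (y (i - k)) (y (j - k)) = 0" using rel 2 a by auto
        then show ?thesis using 2 a by (auto simp: b_def heis_R_sc_def)
      next
        case a: 3
        then have "b j = z \<or> b j = u" by (simp add: b_def)
        then show ?thesis using 2 a \<omega>z \<omega>u by (auto simp: heis_R_sc_def)
      qed
    next
      case 3
      then have "b i = z \<or> b i = u" by (simp add: b_def)
      then show ?thesis using 3 \<omega>z \<omega>u by (auto simp: heis_R_sc_def)
    qed
  qed
  have brk: "br (b i) (b j) = (\<Sum>l<2*k+2. heis_R_sc k i j l *\<^sub>R b l)"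
    if "i < 2*k+2" "j < 2*k+2" for i j
  proof -
    have "(\<Sum>l<2*k+2. heis_R_sc k i j l *\<^sub>R b l) = (\<Sum>l<2*k+2. if l = 2*k then heis_R_sc k i j (2*k) *\<^sub>R b l else 0)"
      by (rule sum.cong) (simp_all add: heis0)
    also have "\<dots> = heis_R_sc k i j (2*k) *\<^sub>R z" using bz by simp
    also have "\<dots> = \<omega> (b i) (b j) *\<^sub>R z" using \<omega>b[OF that] by simp
    also have "\<dots> = br (b i) (b j)" unfolding \<omega>_def by (rule brz[symmetric])
    finally show ?thesis by simp
  qed
  have c4: "\<forall>i<2*k+2. \<forall>j<2*k+2. br (b i) (b j) = (\<Sum>l<2*k+2. heis_R_sc k i j l *\<^sub>R b l)"
    using brk by blast
  have c13: "inj_on b {..<2*k+2}" "independent (b ` {..<2*k+2})" using ind by simp_all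
  have iso: "iso_to_sc br (2 * k + 2) (heis_R_sc k)"
    unfolding iso_to_sc_def
    by (rule exI[of _ b], intro conjI, fact c13(1), fact c13(2), fact spUNIV, fact c4)
  have "2 * k = n - 2" using \<open>n = 2*k+2\<close> by simp
  then show ?thesis using iso by (intro exI[of _ k] conjI)
qed

end

lemma indep_swap:
  fixes a b :: "'a::euclidean_space"
  assumes a0: "a \<noteq> 0" and b: "b \<notin> span {a}"
  shows "b \<noteq> 0 \<and> a \<notin> span {b}"
proof
  show "b \<noteq> 0" using b span_zero by auto
  show "a \<notin> span {b}"
  proof
    assume "a \<in> span {b}"
    then obtain t where t: "a = t *\<^sub>R b" by (auto simp: span_singleton)
    then have "t \<noteq> 0" using a0 by auto
    then have "b = (1 / t) *\<^sub>R a" using t by simp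
    moreover have "(1 / t) *\<^sub>R a \<in> span {a}" by (rule span_scale) (simp add: span_base)
    ultimately show False using b by simp
  qed
qed

lemma coord2:
  fixes a b :: "'a::euclidean_space" and f g :: "'a \<Rightarrow> real"
  assumes lf: "linear f" and lg: "linear g"
    and fa: "f a = 1" and fb: "f b = 0" and ga: "g a = 0" and gb: "g b = 1"
    and v: "v \<in> span {a, b}"
  shows "v = f v *\<^sub>R a + g v *\<^sub>R b"
proof -
  obtain k where "v - k *\<^sub>R a \<in> span {b}" using v by (auto simp: span_insert)
  then obtain t where t: "v - k *\<^sub>R a = t *\<^sub>R b" by (auto simp: span_singleton)
  then have v': "v = k *\<^sub>R a + t *\<^sub>R b" by (simp add: algebra_simps)
  have "f v = k" using fa fb by (simp add: v' linear_add[OF lf] linear_cmul[OF lf])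
  moreover have "g v = t" using ga gb by (simp add: v' linear_add[OF lg] linear_cmul[OF lg])
  ultimately show ?thesis using v' by simp
qed

context md begin

lemma span2_eq:
  assumes dA: "dim A = 2" and u: "u \<in> A" and v: "v \<in> A" and u0: "u \<noteq> 0" and vu: "v \<notin> span {u}"
  shows "A = span {u, v}"
proof -
  have sub: "span {u, v} \<subseteq> A" using u v subA by (intro span_minimal) auto
  have "u \<noteq> v" using vu span_base[of u "{u}"] by auto
  have ind: "independent {v, u}"
    using vu u0 by (simp add: independent_insert dependent_single)
  have "dim (span {u, v}) = 2"
    using ind \<open>u \<noteq> v\<close> by (simp add: dim_eq_card_independent insert_commute)
  then show ?thesis using subspace_dim_equal[OF subspace_span subA sub] dA by simp
qed

lemma exists_other:
  assumes dA: "dim A = 2" and u: "u \<noteq> 0"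
  shows "\<exists>v\<in>A. v \<notin> span {u}"
proof (rule ccontr)
  assume "\<not> ?thesis"
  then have "A \<subseteq> span {u}" by auto
  then have "dim A \<le> card {u}" by (rule dim_le_card) simp
  then show False using dA by simp
qed

lemma exists_nonzero:
  assumes dA: "dim A = 2"
  shows "\<exists>u\<in>A. u \<noteq> 0"
proof (rule ccontr)
  assume "\<not> ?thesis"
  then have "A \<subseteq> span {}" by auto
  then have "dim A \<le> card ({}::'a set)" by (rule dim_le_card) simp
  then show False using dA by simp
qed

lemma caseI:
  assumes dA: "dim A = 2" and a0A: "a0 \<in> A" and a00: "a0 \<noteq> 0"
    and inv: "\<And>x. br x a0 \<in> span {a0}"
    and nc: "\<exists>v\<in>A. \<exists>x. br x v \<noteq> 0"
  shows False
proof -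
  obtain a1 where a1A: "a1 \<in> A" and a1n: "a1 \<notin> span {a0}" using exists_other[OF dA a00] by blast
  have Aeq: "A = span {a0, a1}" by (rule span2_eq[OF dA a0A a1A a00 a1n])
  obtain f :: "'a \<Rightarrow> real" where lf: "linear f" and f0: "f a0 = 0" and f1: "f a1 = 1"
    using lin_functional_exists[OF a00 a1n] by blast
  have sw: "a1 \<noteq> 0 \<and> a0 \<notin> span {a1}" by (rule indep_swap[OF a00 a1n])
  obtain g :: "'a \<Rightarrow> real" where lg: "linear g" and g1: "g a1 = 0" and g0: "g a0 = 1"
    using lin_functional_exists[of a1 a0] sw by blast
  have crd: "v = g v *\<^sub>R a0 + f v *\<^sub>R a1" if "v \<in> A" for v
    by (rule coord2[OF lg lf g0 g1 f0 f1]) (use that Aeq in simp)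
  define c where "c x = g (br x a0)" for x
  define \<mu> where "\<mu> x = g (br x a1)" for x
  have lc: "linear c" unfolding c_def
    by (intro linearI) (simp_all add: linear_add[OF lg] linear_cmul[OF lg])
  have l\<mu>: "linear \<mu>" unfolding \<mu>_def
    by (intro linearI) (simp_all add: linear_add[OF lg] linear_cmul[OF lg])
  have brc: "br x a0 = c x *\<^sub>R a0" for x
  proof -
    obtain t where t: "br x a0 = t *\<^sub>R a0" using inv[of x] by (auto simp: span_singleton)
    then have "c x = t" using g0 by (simp add: c_def linear_cmul[OF lg])
    then show ?thesis using t by simp
  qed
  have fev: "f (br x v) = f (br x a1) * f v" if "v \<in> A" for x v
  proof -
    have "br x v = g v *\<^sub>R br x a0 + f v *\<^sub>R br x a1"
      using crd[OF that] by (metis radd rmul)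
    then show ?thesis using f0 by (simp add: brc linear_add[OF lf] linear_cmul[OF lf])
  qed
  have l\<nu>: "linear (\<lambda>x. f (br x a1))"
    by (intro linearI) (simp_all add: linear_add[OF lf] linear_cmul[OF lf])
  have fx1: "f (br x a1) = 0" for x
    by (rule noL[OF lf a1A, of "\<lambda>x. f (br x a1)"]) (simp_all add: f1 l\<nu> cycI[OF lf fev])
  have brm: "br x a1 = \<mu> x *\<^sub>R a0" for x
    using crd[of "br x a1"] fx1[of x] by (simp add: \<mu>_def)
  have ca0: "c a0 = 0" using brc[of a0] a00 by simp
  have \<mu>a0: "\<mu> a0 = - c a1"
  proof -
    have "br a0 a1 = - br a1 a0" by (rule anti)
    then have "\<mu> a0 *\<^sub>R a0 = - (c a1 *\<^sub>R a0)" by (simp add: brm brc)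
    then have "(\<mu> a0 + c a1) *\<^sub>R a0 = 0" by (simp add: algebra_simps)
    then show ?thesis using a00 by (simp add: eq_neg_iff_add_eq_0)
  qed
  have cbr: "c (br x y) = f (br x y) * c a1" for x y
  proof -
    have "br x y = g (br x y) *\<^sub>R a0 + f (br x y) *\<^sub>R a1" by (rule crd) simp
    then have "c (br x y) = g (br x y) * c a0 + f (br x y) * c a1"
      by (metis linear_add[OF lc] linear_cmul[OF lc] real_scaleR_def)
    then show ?thesis using ca0 by simp
  qed
  have cjac: "c (br x y) = 0" for x y
  proof -
    have "br x (br y a0) + br y (br a0 x) + br a0 (br x y) = 0" by (rule jac)
    moreover have "br a0 x = - (c x *\<^sub>R a0)" using anti[of a0 x] brc[of x] by simp
    moreover have "br a0 (br x y) = - (c (br x y) *\<^sub>R a0)" using anti[of a0 "br x y"] brc[of "br x y"] by simp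
    ultimately have "- (c (br x y) *\<^sub>R a0) = 0" by (simp add: brc algebra_simps)
    then show ?thesis using a00 by simp
  qed
  have ca1: "c a1 = 0"
  proof (rule ccontr)
    assume ne: "c a1 \<noteq> 0"
    have "f (br x y) = (\<lambda>_. 0) x * (\<lambda>_. 0) y - (\<lambda>_. 0) y * (\<lambda>_. 0) x" for x y
      using cbr[of x y] cjac[of x y] ne by simp
    then show False
      by (rule noWedge[OF lf a1A _ linear_zero linear_zero, rotated]) (simp add: f1)
  qed
  have \<mu>a0': "\<mu> a0 = 0" using \<mu>a0 ca1 by simp
  have \<mu>br: "\<mu> (br x y) = f (br x y) * \<mu> a1" for x y
  proof -
    have "br x y = g (br x y) *\<^sub>R a0 + f (br x y) *\<^sub>R a1" by (rule crd) simp
    then have "\<mu> (br x y) = g (br x y) * \<mu> a0 + f (br x y) * \<mu> a1"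
      by (metis linear_add[OF l\<mu>] linear_cmul[OF l\<mu>] real_scaleR_def)
    then show ?thesis using \<mu>a0' by simp
  qed
  have \<mu>jac: "\<mu> (br x y) = c x * \<mu> y - c y * \<mu> x" for x y
  proof -
    have "br x (br y a1) + br y (br a1 x) + br a1 (br x y) = 0" by (rule jac)
    moreover have "br a1 x = - (\<mu> x *\<^sub>R a0)" using anti[of a1 x] brm[of x] by simp
    moreover have "br a1 (br x y) = - (\<mu> (br x y) *\<^sub>R a0)" using anti[of a1 "br x y"] brm[of "br x y"] by simp
    ultimately have "(\<mu> y * c x - \<mu> x * c y - \<mu> (br x y)) *\<^sub>R a0 = 0"
      by (simp add: brm brc algebra_simps)
    then have "\<mu> y * c x - \<mu> x * c y - \<mu> (br x y) = 0" using a00 by (simp only: scaleR_eq_0_iff) simp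
    then show ?thesis by (simp add: algebra_simps)
  qed
  have \<mu>a1: "\<mu> a1 = 0"
  proof (rule ccontr)
    assume ne: "\<mu> a1 \<noteq> 0"
    have lc': "linear (\<lambda>x. c x / \<mu> a1)"
      by (intro linearI) (simp_all add: linear_add[OF lc] linear_cmul[OF lc] add_divide_distrib)
    have "f (br x y) = c x / \<mu> a1 * \<mu> y - c y / \<mu> a1 * \<mu> x" for x y
      using \<mu>br[of x y] \<mu>jac[of x y] ne by (simp add: field_simps)
    then show False
      by (rule noWedge[OF lf a1A _ lc' l\<mu>, rotated]) (simp add: f1)
  qed
  have comm: "c x * \<mu> y = c y * \<mu> x" for x y
    using \<mu>br[of x y] \<mu>jac[of x y] \<mu>a1 by simp
  show False
  proof (cases "\<forall>x. c x = 0")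
    case True
    have gev: "g (br x v) = \<mu> x * f v" if "v \<in> A" for x v
    proof -
      have "br x v = g v *\<^sub>R br x a0 + f v *\<^sub>R br x a1"
        using crd[OF that] by (metis radd rmul)
      then show ?thesis using True g0 by (simp add: brc brm linear_add[OF lg] linear_cmul[OF lg])
    qed
    have \<mu>0: "\<mu> x = 0" for x
      by (rule noL[OF lf a1A, of \<mu>]) (simp_all add: f1 l\<mu> cycI[OF lg gev])
    have "br x v = 0" if "v \<in> A" for x v
    proof -
      have "br x v = g v *\<^sub>R br x a0 + f v *\<^sub>R br x a1"
        using crd[OF that] by (metis radd rmul)
      then show ?thesis using True \<mu>0 by (simp add: brc brm)
    qed
    then show False using nc by blast
  next
    case False
    then obtain x0 where cx0: "c x0 \<noteq> 0" by blast
    define t where "t = \<mu> x0 / c x0"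
    have \<mu>t: "\<mu> y = t * c y" for y
      using comm[of x0 y] cx0 by (simp add: t_def field_simps)
    define h where "h v = g v + t * f v" for v
    have lh: "linear h" unfolding h_def
      by (intro linearI) (simp_all add: linear_add[OF lg] linear_cmul[OF lg] linear_add[OF lf] linear_cmul[OF lf] algebra_simps)
    have h0: "h a0 = 1" using g0 f0 by (simp add: h_def)
    have hev: "h (br x v) = c x * h v" if "v \<in> A" for x v
    proof -
      have "br x v = g v *\<^sub>R br x a0 + f v *\<^sub>R br x a1"
        using crd[OF that] by (metis radd rmul)
      also have "\<dots> = (c x * h v) *\<^sub>R a0" by (simp add: brc brm \<mu>t h_def algebra_simps)
      finally show ?thesis using h0 by (simp add: linear_cmul[OF lh])
    qed
    have "c x0 = 0"
      by (rule noL[OF lh a0A, of c]) (simp_all add: h0 lc cycI[OF lh hev])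
    then show False using cx0 by simp
  qed
qed

end

context md begin

lemma P2a:
  assumes dA: "dim A = 2" and nc: "\<exists>v\<in>A. \<exists>x. br x v \<noteq> 0"
  shows "\<exists>x1 x2 y1 y2. y1 \<in> A \<and> y2 \<in> A \<and> y1 \<noteq> 0 \<and> y2 \<notin> span {y1} \<and>
     (\<forall>v\<in>A. br x1 v = v) \<and> br x2 y1 = - y2 \<and> br x2 y2 = y1 \<and> br x1 x2 = 0 \<and>
     (\<forall>v\<in>A. \<forall>w\<in>A. br v w = 0) \<and>
     (\<forall>z. \<exists>p q. \<forall>v\<in>A. br (z - p *\<^sub>R x1 - q *\<^sub>R x2) v = 0)"
proof -
  have noinv: "\<exists>x. br x a \<notin> span {a}" if "a \<in> A" "a \<noteq> 0" for a
    using caseI[OF dA that _ nc] by blast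
  obtain a1 where a1A: "a1 \<in> A" and a10: "a1 \<noteq> 0" using exists_nonzero[OF dA] by blast
  obtain x0 where bn: "br x0 a1 \<notin> span {a1}" using noinv[OF a1A a10] by blast
  define b where "b = br x0 a1"
  have bA: "b \<in> A" by (simp add: b_def)
  have bn': "b \<notin> span {a1}" using bn by (simp add: b_def)
  have Aeq: "A = span {a1, b}" by (rule span2_eq[OF dA a1A bA a10 bn'])
  obtain fb :: "'a \<Rightarrow> real" where lfb: "linear fb" and fba: "fb a1 = 0" and fbb: "fb b = 1"
    using lin_functional_exists[OF a10 bn'] by blast
  have sw: "b \<noteq> 0 \<and> a1 \<notin> span {b}" by (rule indep_swap[OF a10 bn'])
  obtain fa :: "'a \<Rightarrow> real" where lfa: "linear fa" and fab: "fa b = 0" and faa: "fa a1 = 1"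
    using lin_functional_exists[of b a1] sw by blast
  have crd: "v = fa v *\<^sub>R a1 + fb v *\<^sub>R b" if "v \<in> A" for v
    by (rule coord2[OF lfa lfb faa fab fba fbb]) (use that Aeq in simp)
  have brlin: "br x v = fa v *\<^sub>R br x a1 + fb v *\<^sub>R br x b" if "v \<in> A" for x v
  proof -
    have "br x v = br x (fa v *\<^sub>R a1 + fb v *\<^sub>R b)" using crd[OF that] by simp
    then show ?thesis by simp
  qed
  have d0: "br a1 b = 0"
  proof (rule ccontr)
    assume dn: "br a1 b \<noteq> 0"
    have "br x (br a1 b) \<in> span {br a1 b}" for x
    proof -
      have "br x (br a1 b) + br a1 (br b x) + br b (br x a1) = 0" by (rule jac)
      moreover have "br a1 (br b x) = - br a1 (br x b)" using anti[of b x] by simp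
      moreover have "br b (br x a1) = - br (br x a1) b" by (rule anti)
      ultimately have j: "br x (br a1 b) = br a1 (br x b) + br (br x a1) b"
        by (simp add: algebra_simps eq_neg_iff_add_eq_0)
      have "br a1 (br x b) = fb (br x b) *\<^sub>R br a1 b"
        using brlin[of "br x b" a1, OF brA] anti[of a1 b] by (simp add: anti[of a1 b])
      moreover have "br (br x a1) b = fa (br x a1) *\<^sub>R br a1 b"
      proof -
        have "br (br x a1) b = - br b (br x a1)" by (rule anti)
        also have "\<dots> = - (fa (br x a1) *\<^sub>R br b a1 + fb (br x a1) *\<^sub>R br b b)" using brlin[of "br x a1" b] by simp
        also have "\<dots> = fa (br x a1) *\<^sub>R br a1 b" using anti[of b a1] by simp
        finally show ?thesis .
      qed
      ultimately have "br x (br a1 b) = (fb (br x b) + fa (br x a1)) *\<^sub>R br a1 b"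
        using j by (simp add: scaleR_add_left)
      then show ?thesis by (simp add: span_base span_scale)
    qed
    then show False using caseI[OF dA brA dn _ nc] by blast
  qed
  have ba: "br b a1 = 0" using anti[of b a1] d0 by simp
  have abel: "br v w = 0" if "v \<in> A" "w \<in> A" for v w
  proof -
    have "br v a1 = - br a1 v" by (rule anti)
    also have "\<dots> = 0" using brlin[OF that(1), of a1] d0 by simp
    finally have va: "br v a1 = 0" .
    have "br v b = - br b v" by (rule anti)
    also have "\<dots> = 0" using brlin[OF that(1), of b] ba by simp
    finally have vb: "br v b = 0" .
    show ?thesis using brlin[OF that(2), of v] va vb by simp
  qed
  have commute: "br x (br y v) = br y (br x v)" if "v \<in> A" for x y v
  proof -
    have "br x (br y v) + br y (br v x) + br v (br x y) = 0" by (rule jac)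
    moreover have "br v (br x y) = 0" using abel[OF that brA] .
    moreover have "br y (br v x) = - br y (br x v)" using anti[of v x] by simp
    ultimately show ?thesis by (simp add: eq_neg_iff_add_eq_0)
  qed
  have noeig: "br x0 w \<notin> span {w}" if wA: "w \<in> A" and w0: "w \<noteq> 0" for w
  proof
    assume "br x0 w \<in> span {w}"
    then obtain l where l: "br x0 w = l *\<^sub>R w" by (auto simp: span_singleton)
    have Esub: "v \<in> span {w}" if "v \<in> A" "br x0 v = l *\<^sub>R v" for v
    proof (rule ccontr)
      assume vn: "v \<notin> span {w}"
      have "A = span {w, v}" by (rule span2_eq[OF dA wA that(1) w0 vn])
      then have "a1 \<in> span {w, v}" using a1A by simp
      then obtain k where "a1 - k *\<^sub>R w \<in> span {v}" by (auto simp: span_insert)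
      then obtain t where "a1 - k *\<^sub>R w = t *\<^sub>R v" by (auto simp: span_singleton)
      then have a1e: "a1 = k *\<^sub>R w + t *\<^sub>R v" by (simp add: algebra_simps)
      have "b = l *\<^sub>R a1" unfolding b_def a1e using l that(2) by (simp add: algebra_simps)
      then have "b \<in> span {a1}" by (simp add: span_base span_scale)
      then show False using bn' by simp
    qed
    have "br y w \<in> span {w}" for y
    proof (rule Esub)
      show "br y w \<in> A" by simp
      show "br x0 (br y w) = l *\<^sub>R br y w" using commute[OF wA, of x0 y] l by simp
    qed
    then show False using caseI[OF dA wA w0 _ nc] by blast
  qed
  define \<alpha> where "\<alpha> x = fa (br x a1)" for x
  define \<beta> where "\<beta> x = fb (br x a1)" for x
  have l\<alpha>: "linear \<alpha>" unfolding \<alpha>_def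
    by (intro linearI) (simp_all add: linear_add[OF lfa] linear_cmul[OF lfa])
  have l\<beta>: "linear \<beta>" unfolding \<beta>_def
    by (intro linearI) (simp_all add: linear_add[OF lfb] linear_cmul[OF lfb])
  have ra1: "br x a1 = \<alpha> x *\<^sub>R a1 + \<beta> x *\<^sub>R b" for x
    unfolding \<alpha>_def \<beta>_def by (rule crd) simp
  have rb: "br x b = \<alpha> x *\<^sub>R b + \<beta> x *\<^sub>R br x0 b" for x
  proof -
    have "br x b = br x0 (br x a1)" unfolding b_def by (rule commute[OF a1A])
    then show ?thesis by (simp add: ra1[of x] b_def[symmetric])
  qed
  have rep: "br x v = \<alpha> x *\<^sub>R v + \<beta> x *\<^sub>R br x0 v" if vA: "v \<in> A" for x v
  proof -
    have "br x v = fa v *\<^sub>R br x a1 + fb v *\<^sub>R br x b" by (rule brlin[OF vA])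
    also have "\<dots> = \<alpha> x *\<^sub>R (fa v *\<^sub>R a1 + fb v *\<^sub>R b) + \<beta> x *\<^sub>R (fa v *\<^sub>R b + fb v *\<^sub>R br x0 b)"
      by (simp add: ra1[of x] rb[of x] algebra_simps)
    also have "fa v *\<^sub>R b + fb v *\<^sub>R br x0 b = br x0 v"
      using brlin[OF vA, of x0] by (simp add: b_def)
    finally show ?thesis using crd[OF vA, symmetric] by simp
  qed
  have \<alpha>0: "\<alpha> x0 = 0" by (simp add: \<alpha>_def b_def[symmetric] fab)
  have \<beta>0: "\<beta> x0 = 1" by (simp add: \<beta>_def b_def[symmetric] fbb)
  have "\<exists>x. \<alpha> x \<noteq> 0"
  proof (rule ccontr)
    assume "\<not> (\<exists>x. \<alpha> x \<noteq> 0)"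
    then have a0: "\<alpha> x = 0" for x by simp
    define b' where "b' = br x0 b"
    have b'n: "b' \<notin> span {b}" unfolding b'_def by (rule noeig[OF bA]) (use sw in simp)
    have sw2: "b' \<noteq> 0 \<and> b \<notin> span {b'}" by (rule indep_swap[OF _ b'n]) (use sw in simp)
    obtain h :: "'a \<Rightarrow> real" where lh: "linear h" and hb': "h b' = 0" and hb: "h b = 1"
      using lin_functional_exists[of b' b] sw2 by blast
    define F where "F v = h (br x0 v)" for v
    have lF: "linear F" unfolding F_def
      by (intro linearI) (simp_all add: linear_add[OF lh] linear_cmul[OF lh])
    have Fa1: "F a1 = 1" by (simp add: F_def b_def[symmetric] hb)
    have hev: "h (br x v) = \<beta> x * F v" if "v \<in> A" for x v
      using rep[OF that, of x] a0 by (simp add: F_def linear_cmul[OF lh])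
    have "\<beta> x0 = 0"
      by (rule noL[OF lF a1A, of \<beta>]) (simp_all add: Fa1 l\<beta> cycI[OF lh hev])
    then show False using \<beta>0 by simp
  qed
  then obtain xa where xa: "\<alpha> xa \<noteq> 0" by blast
  define x1 where "x1 = (1 / \<alpha> xa) *\<^sub>R (xa - \<beta> xa *\<^sub>R x0)"
  have \<alpha>1: "\<alpha> x1 = 1" using xa \<alpha>0
    by (simp add: x1_def linear_cmul[OF l\<alpha>] linear_diff[OF l\<alpha>])
  have \<beta>1: "\<beta> x1 = 0" using xa \<beta>0
    by (simp add: x1_def linear_cmul[OF l\<beta>] linear_diff[OF l\<beta>])
  have rx1: "br x1 v = v" if "v \<in> A" for v using rep[OF that, of x1] \<alpha>1 \<beta>1 by simp
  define u where "u = fa (br x0 b)"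
  define w where "w = fb (br x0 b)"
  have R2: "br x0 b = u *\<^sub>R a1 + w *\<^sub>R b" unfolding u_def w_def by (rule crd) simp
  have disc: "w^2 + 4 * u < 0"
  proof (rule ccontr)
    assume "\<not> w^2 + 4 * u < 0"
    then have D: "w^2 + 4 * u \<ge> 0" by simp
    define s where "s = sqrt (w^2 + 4 * u)"
    have s2: "s * s = w^2 + 4 * u" using D by (simp add: s_def)
    define l where "l = (w + s) / 2"
    define l' where "l' = (w - s) / 2"
    have ll: "l * l' = - u" using s2 by (simp add: l_def l'_def field_simps power2_eq_square)
    have lw: "w - l' = l" by (simp add: l_def l'_def field_simps)
    define e where "e = b - l' *\<^sub>R a1"
    have eA: "e \<in> A" unfolding e_def using bA a1A subA by (simp add: subspace_diff subspace_scale)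
    have e0: "e \<noteq> 0"
    proof
      assume "e = 0"
      then have "b = l' *\<^sub>R a1" by (simp add: e_def)
      then have "b \<in> span {a1}" by (simp add: span_base span_scale)
      then show False using bn' by simp
    qed
    have "br x0 e = u *\<^sub>R a1 + (w - l') *\<^sub>R b"
      by (simp add: e_def R2 b_def[symmetric] algebra_simps)
    also have "\<dots> = l *\<^sub>R e" using ll lw by (simp add: e_def algebra_simps)
    finally have "br x0 e \<in> span {e}" by (simp add: span_base span_scale)
    then show False using noeig[OF eA e0] by simp
  qed
  define \<sigma> where "\<sigma> = sqrt (- u - w^2 / 4)"
  have \<sigma>pos: "\<sigma> > 0" using disc by (simp add: \<sigma>_def)
  have \<sigma>2: "\<sigma> * \<sigma> = - u - w^2 / 4" using disc by (simp add: \<sigma>_def)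
  define x2' where "x2' = (1 / \<sigma>) *\<^sub>R (x0 - (w / 2) *\<^sub>R x1)"
  have rx2': "br x2' v = (1 / \<sigma>) *\<^sub>R (br x0 v - (w / 2) *\<^sub>R v)" if "v \<in> A" for v
    using rx1[OF that] by (simp add: x2'_def)
  define x2 where "x2 = x2' - br x1 x2'"
  have rx2: "br x2 v = (1 / \<sigma>) *\<^sub>R (br x0 v - (w / 2) *\<^sub>R v)" if "v \<in> A" for v
    using rx2'[OF that] abel[OF brA that, of x1 x2'] by (simp add: x2_def)
  have c12: "br x1 x2 = 0" using rx1[OF brA, of x1 x2'] by (simp add: x2_def)
  define y1 where "y1 = a1"
  define y2 where "y2 = - br x2 a1"
  have y2e: "y2 = - ((1 / \<sigma>) *\<^sub>R (b - (w / 2) *\<^sub>R a1))"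
    using rx2[OF a1A] by (simp add: y2_def b_def)
  have y2A: "y2 \<in> A" by (simp add: y2_def subspace_neg[OF subA])
  have y2n: "y2 \<notin> span {y1}"
  proof
    assume "y2 \<in> span {y1}"
    then obtain t where t: "y2 = t *\<^sub>R a1" by (auto simp: span_singleton y1_def)
    have "b = (w / 2 - \<sigma> * t) *\<^sub>R a1"
    proof -
      have "(1 / \<sigma>) *\<^sub>R (b - (w / 2) *\<^sub>R a1) = - (t *\<^sub>R a1)" using t y2e by (simp add: minus_equation_iff)
      then have "\<sigma> *\<^sub>R ((1 / \<sigma>) *\<^sub>R (b - (w / 2) *\<^sub>R a1)) = \<sigma> *\<^sub>R (- (t *\<^sub>R a1))" by simp
      then have "b - (w / 2) *\<^sub>R a1 = - ((\<sigma> * t) *\<^sub>R a1)" using \<sigma>pos by simp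
      then show ?thesis by (simp add: algebra_simps)
    qed
    then have "b \<in> span {a1}" by (simp add: span_base span_scale)
    then show False using bn' by simp
  qed
  have x2y1: "br x2 y1 = - y2" by (simp add: y1_def y2_def)
  have x2y2: "br x2 y2 = y1"
  proof -
    define q where "q = (1 / \<sigma>) *\<^sub>R (b - (w / 2) *\<^sub>R a1)"
    have qA: "q \<in> A" unfolding q_def using bA a1A subA by (simp add: subspace_diff subspace_scale)
    have "br x0 q = (1 / \<sigma>) *\<^sub>R (u *\<^sub>R a1 + w *\<^sub>R b - (w / 2) *\<^sub>R b)"
      by (simp add: q_def R2 b_def[symmetric])
    then have "br x2 q = (1 / \<sigma>) *\<^sub>R ((1 / \<sigma>) *\<^sub>R (u *\<^sub>R a1 + w *\<^sub>R b - (w / 2) *\<^sub>R b) - (w / 2) *\<^sub>R q)"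
      using rx2[OF qA] by simp
    also have "\<dots> = (1 / (\<sigma> * \<sigma>) * (u + w^2 / 4)) *\<^sub>R a1"
      by (simp add: q_def algebra_simps power2_eq_square) (simp add: scaleR_add_left[symmetric])
    also have "1 / (\<sigma> * \<sigma>) * (u + w^2 / 4) = -1" using \<sigma>2 \<sigma>pos by (simp add: field_simps)
    also have "(-1::real) *\<^sub>R a1 = - a1" by simp
    finally have "br x2 q = - a1" .
    moreover have "y2 = - q" using y2e by (simp add: q_def)
    ultimately show ?thesis by (simp add: y1_def)
  qed
  have decomp: "\<exists>p q. \<forall>v\<in>A. br (z - p *\<^sub>R x1 - q *\<^sub>R x2) v = 0" for z
  proof (intro exI ballI)
    fix v assume vA: "v \<in> A"
    have "br (z - (\<alpha> z + \<beta> z * w / 2) *\<^sub>R x1 - (\<beta> z * \<sigma>) *\<^sub>R x2) v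
        = (\<alpha> z *\<^sub>R v + \<beta> z *\<^sub>R br x0 v) - (\<alpha> z + \<beta> z * w / 2) *\<^sub>R v
          - (\<beta> z * \<sigma>) *\<^sub>R ((1 / \<sigma>) *\<^sub>R (br x0 v - (w / 2) *\<^sub>R v))"
      using rep[OF vA, of z] rx1[OF vA] rx2[OF vA] by simp
    also have "\<dots> = 0" using \<sigma>pos by (simp add: algebra_simps)
    finally show "br (z - (\<alpha> z + \<beta> z * w / 2) *\<^sub>R x1 - (\<beta> z * \<sigma>) *\<^sub>R x2) v = 0" .
  qed
  have "y1 \<in> A" "y1 \<noteq> 0" using a1A a10 by (simp_all add: y1_def)
  then show ?thesis using y2A y2n rx1 x2y1 x2y2 c12 abel decomp by blast
qed

end

lemma sum6: "(\<Sum>l<6::nat. f l) = f 0 + f 1 + f 2 + f 3 + f 4 + (f 5 :: 'a::comm_monoid_add)"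
  by (simp add: numeral_eq_Suc add.assoc)

lemma lt6: "(i::nat) < 6 \<Longrightarrow> i = 0 \<or> i = 1 \<or> i = 2 \<or> i = 3 \<or> i = 4 \<or> i = 5"
  by linarith

context md begin

lemma P2b:
  assumes dA: "dim A = 2" and y1A: "y1 \<in> A" and y2A: "y2 \<in> A" and y10: "y1 \<noteq> 0"
    and y2n: "y2 \<notin> span {y1}" and rx1: "\<forall>v\<in>A. br x1 v = v"
    and x2y1: "br x2 y1 = - y2" and x2y2: "br x2 y2 = y1" and c12: "br x1 x2 = 0"
    and abel: "\<forall>v\<in>A. \<forall>w\<in>A. br v w = 0"
    and decomp: "\<forall>z. \<exists>p q. \<forall>v\<in>A. br (z - p *\<^sub>R x1 - q *\<^sub>R x2) v = 0"
  shows "iso_to_sc br 6 affC_R2_sc"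
proof -
  have Aeq: "A = span {y1, y2}" by (rule span2_eq[OF dA y1A y2A y10 y2n])
  define D' where "D' = {d. br x1 d = 0 \<and> br x2 d = 0 \<and> (\<forall>v\<in>A. br d v = 0)}"
  have dec: "\<exists>p q a d. a \<in> A \<and> d \<in> D' \<and> z = p *\<^sub>R x1 + q *\<^sub>R x2 + a + d" for z
  proof -
    obtain p q where pq: "\<forall>v\<in>A. br (z - p *\<^sub>R x1 - q *\<^sub>R x2) v = 0" using decomp by blast
    define z' where "z' = z - p *\<^sub>R x1 - q *\<^sub>R x2"
    define a where "a = br x1 z'"
    define z'' where "z'' = z' - a"
    have aA: "a \<in> A" by (simp add: a_def)
    have h1: "br z'' v = 0" if "v \<in> A" for v
      using pq that abel aA by (simp add: z''_def z'_def[symmetric])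
    have h2: "br x1 z'' = 0" using rx1 aA by (simp add: z''_def a_def)
    have h3: "br x2 z'' = 0"
    proof -
      have "br x1 (br x2 z'') + br x2 (br z'' x1) + br z'' (br x1 x2) = 0" by (rule jac)
      moreover have "br z'' x1 = 0" using anti[of z'' x1] h2 by simp
      ultimately have "br x1 (br x2 z'') = 0" using c12 by simp
      moreover have "br x1 (br x2 z'') = br x2 z''" using rx1 brA by blast
      ultimately show ?thesis by simp
    qed
    have "z'' \<in> D'" using h1 h2 h3 by (simp add: D'_def)
    moreover have "z = p *\<^sub>R x1 + q *\<^sub>R x2 + a + z''" by (simp add: z''_def z'_def)
    ultimately show ?thesis using aA by blast
  qed
  have cen: "br d y = 0" if dD: "d \<in> D'" for d y
  proof -
    obtain p q a d2 where aA: "a \<in> A" and d2: "d2 \<in> D'" and y: "y = p *\<^sub>R x1 + q *\<^sub>R x2 + a + d2"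
      using dec by blast
    have d: "br x1 d = 0" "br x2 d = 0" "\<forall>v\<in>A. br d v = 0" using dD by (auto simp: D'_def)
    have d2': "br x1 d2 = 0" using d2 by (simp add: D'_def)
    have "br d d2 = 0"
    proof -
      have "br x1 (br d d2) + br d (br d2 x1) + br d2 (br x1 d) = 0" by (rule jac)
      moreover have "br d2 x1 = 0" using anti[of d2 x1] d2' by simp
      ultimately have "br x1 (br d d2) = 0" using d(1) by simp
      moreover have "br x1 (br d d2) = br d d2" using rx1 brA by blast
      ultimately show ?thesis by simp
    qed
    moreover have "br d x1 = 0" using anti[of d x1] d(1) by simp
    moreover have "br d x2 = 0" using anti[of d x2] d(2) by simp
    moreover have "br d a = 0" using d(3) aA by blast
    ultimately show ?thesis using y by simp
  qed
  define Z where "Z = {z. \<forall>y. br z y = 0}"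
  have sZ: "subspace Z" unfolding Z_def subspace_def by simp
  have DZ: "D' \<subseteq> Z" using cen by (auto simp: Z_def)
  define F where "F v = (v \<bullet> y1) / (y1 \<bullet> y1)" for v
  have lF: "linear F" unfolding F_def
    by (intro linearI) (simp_all add: inner_add_left add_divide_distrib)
  have Fy1: "F y1 = 1" using y10 by (simp add: F_def)
  have "Z \<subseteq> rad F" by (auto simp: Z_def rad_def linear_0[OF lF])
  then have dZ: "dim Z \<le> 2" using rad2[OF lF y1A] Fy1 dim_subset[of Z "rad F"] by simp
  obtain BZ where BZ: "BZ \<subseteq> Z" "independent BZ" "Z \<subseteq> span BZ" "card BZ = dim Z"
    using basis_exists by blast
  have fBZ: "finite BZ" using BZ(2) by (simp add: independent_imp_finite)
  define S where "S = {x1, x2, y1, y2}"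
  have cS: "card S \<le> 4"
  proof -
    have "S = set [x1, x2, y1, y2]" by (simp add: S_def)
    then show ?thesis using card_length[of "[x1, x2, y1, y2]"] by simp
  qed
  have spanall: "UNIV \<subseteq> span (S \<union> BZ)"
  proof
    fix z :: 'a
    obtain p q a d where aA: "a \<in> A" and dD: "d \<in> D'" and z: "z = p *\<^sub>R x1 + q *\<^sub>R x2 + a + d"
      using dec by blast
    have "x1 \<in> span (S \<union> BZ)" "x2 \<in> span (S \<union> BZ)" by (simp_all add: S_def span_base)
    moreover have "a \<in> span (S \<union> BZ)"
    proof -
      have "span {y1, y2} \<subseteq> span (S \<union> BZ)" by (rule span_mono) (auto simp: S_def)
      then show ?thesis using aA Aeq by auto
    qed
    moreover have "d \<in> span (S \<union> BZ)"
    proof -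
      have "d \<in> span BZ" using dD DZ BZ(3) by blast
      moreover have "span BZ \<subseteq> span (S \<union> BZ)" by (rule span_mono) auto
      ultimately show ?thesis by blast
    qed
    ultimately have "p *\<^sub>R x1 + q *\<^sub>R x2 + a + d \<in> span (S \<union> BZ)"
      by (intro span_add span_scale) auto
    then show "z \<in> span (S \<union> BZ)" using z by simp
  qed
  have "n \<le> card (S \<union> BZ)"
    using dim_le_card[OF spanall] fBZ DIM by (simp add: S_def)
  also have "\<dots> \<le> card S + card BZ" by (rule card_Un_le)
  finally have "n \<le> 4 + card BZ" using cS by simp
  then have cBZ: "card BZ = 2" and n6': "n = 6" using n6 dZ BZ(4) by simp_all
  obtain e4 e5 where BZe: "BZ = {e4, e5}" and e45: "e4 \<noteq> e5"
    using cBZ by (auto simp: card_2_iff)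
  have e4c: "br e4 v = 0" "br v e4 = 0" for v
    using BZ(1) BZe anti[of v e4] by (auto simp: Z_def)
  have e5c: "br e5 v = 0" "br v e5 = 0" for v
    using BZ(1) BZe anti[of v e5] by (auto simp: Z_def)
  define bb where "bb i = (if i = 0 then x1 else if i = 1 then x2 else if i = 2 then y1
      else if i = 3 then y2 else if i = 4 then e4 else e5)" for i :: nat
  have "{..<6::nat} = {0, 1, 2, 3, 4, 5}" by auto
  then have img: "bb ` {..<6} = S \<union> BZ" by (auto simp: bb_def S_def BZe)
  have ind: "inj_on bb {..<6} \<and> independent (bb ` {..<6})"
    by (rule indep_from_span) (use spanall img DIM n6' in simp_all)
  have spU: "span (bb ` {..<6}) = UNIV" using spanall img by auto
  have r1: "br x1 y1 = y1" "br x1 y2 = y2" using rx1 y1A y2A by auto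
  have r2: "br y1 x1 = - y1" "br y2 x1 = - y2" using r1 anti[of y1 x1] anti[of y2 x1] by simp_all
  have r3: "br y1 x2 = y2" "br y2 x2 = - y1" using x2y1 x2y2 anti[of y1 x2] anti[of y2 x2] by simp_all
  have r4: "br x2 x1 = 0" using c12 anti[of x2 x1] by simp
  have r5: "br y1 y2 = 0" "br y2 y1 = 0" using abel y1A y2A by auto
  have brk: "br (bb i) (bb j) = (\<Sum>l<6. affC_R2_sc i j l *\<^sub>R bb l)" if "i < 6" "j < 6" for i j
    using lt6[OF that(1)] lt6[OF that(2)]
    by (elim disjE) (simp_all add: sum6 bb_def affC_R2_sc_def r1 r2 r3 r4 r5 c12 x2y1 x2y2 e4c e5c)
  show ?thesis unfolding iso_to_sc_def
    by (rule exI[of _ bb]) (use ind spU brk in simp)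
qed

lemma part2:
  assumes dA: "dim A = 2" and nc: "\<not> A \<subseteq> lie_centre br"
  shows "iso_to_sc br 6 affC_R2_sc"
proof -
  obtain v where vA: "v \<in> A" and "v \<notin> lie_centre br" using nc by blast
  then obtain x where "br v x \<noteq> 0" by (auto simp: lie_centre_def)
  then have "br x v \<noteq> 0" using anti[of x v] by auto
  then have nc': "\<exists>v\<in>A. \<exists>x. br x v \<noteq> 0" using vA by blast
  obtain x1 x2 y1 y2 where "y1 \<in> A" "y2 \<in> A" "y1 \<noteq> 0" "y2 \<notin> span {y1}"
     "\<forall>v\<in>A. br x1 v = v" "br x2 y1 = - y2" "br x2 y2 = y1" "br x1 x2 = 0"
     "\<forall>v\<in>A. \<forall>w\<in>A. br v w = 0" "\<forall>z. \<exists>p q. \<forall>v\<in>A. br (z - p *\<^sub>R x1 - q *\<^sub>R x2) v = 0"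
    using P2a[OF dA nc'] by blast
  then show ?thesis by (intro P2b[OF dA]) 
qed

end

theorem corollary4p2:
  fixes br :: "'a::euclidean_space \<Rightarrow> 'a \<Rightarrow> 'a" and n :: nat
  assumes "MD_algebra br (n - 2) n" and "n \<ge> 6"
  shows "(dim (derived_alg br) = 1 \<longrightarrow>
            (\<exists>m. 2 * m = n - 2 \<and> iso_to_sc br (2 * m + 2) (heis_R_sc m)))
       \<and> (dim (derived_alg br) = 2 \<and> \<not> derived_alg br \<subseteq> lie_centre br \<longrightarrow>
            iso_to_sc br 6 affC_R2_sc)"
proof -
  have "lie_algebra br" using assms(1) by (simp add: MD_algebra_def solvable_lie_def)
  then interpret md br n
    by (intro md.intro lie_alg.intro md_axioms.intro assms)
  show ?thesis using part1 part2 by blast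
qed

end
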